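(* For each integer $n \ge 0$, define $D_{a,n} = \overline{D}(-\tfrac12 + 5\cdot 2^{2n+1}, 2^{-(2n+4)})$ and $D_{b,n} = \overline{D}(-\tfrac12 + 7\cdot 2^{2n+1}, 2^{-(2n+4)})$. Then every $z \in \mathbb{Q}_2$ lying in $D_{a,n}$ or $D_{b,n}$ for some $n \ge 0$ has a bounded forward orbit under $f_1(z) = 3z^3 - \tfrac92 z^2 + 1$.
   Context: Let $|\cdot|$ denote the $2$-adic absolute value on $\mathbb{C}_2$, normalized by $|2| = 1/2$. The notation $\overline{D}(a,\delta)$ denotes the closed disk $\{z \in \mathbb{C}_2 : |z-a| \le \delta\}$. Here $f_1$ is the member with $t=1$ of the family $f_t(z) = -\tfrac32 t(-2z^3+3z^2)+1$. *)

theory Defs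
  imports "HOL-Computational_Algebra.Computational_Algebra"
begin

definition rat_abs2 :: "rat \<Rightarrow> real" where
  "rat_abs2 q = (if q = 0 then 0 else
     (case quotient_of q of (a, b) \<Rightarrow>
        2 powr (real (multiplicity (2::int) b) - real (multiplicity (2::int) a))))"

text \<open>Q_2 is characterised (up to isometric isomorphism) as a field of characteristic 0
  with a non-archimedean absolute value extending the 2-adic absolute value of Q,
  which is complete and in which Q is dense (i.e. the completion of Q w.r.t. |.|_2).\<close>
definition is_Q2_abs :: "('a::field_char_0 \<Rightarrow> real) \<Rightarrow> bool" where
  "is_Q2_abs absv \<longleftrightarrow>
     (\<forall>x. 0 \<le> absv x) \<and>
     (\<forall>x. absv x = 0 \<longleftrightarrow> x = 0) \<and>
     (\<forall>x y. absv (x * y) = absv x * absv y) \<and>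
     (\<forall>x y. absv (x + y) \<le> max (absv x) (absv y)) \<and>
     (\<forall>q. absv (of_rat q) = rat_abs2 q) \<and>
     (\<forall>X::nat \<Rightarrow> 'a. (\<forall>e>0. \<exists>N. \<forall>m\<ge>N. \<forall>n\<ge>N. absv (X m - X n) < e) \<longrightarrow>
        (\<exists>L. \<forall>e>0. \<exists>N. \<forall>n\<ge>N. absv (X n - L) < e)) \<and>
     (\<forall>x. \<forall>e>0. \<exists>q. absv (x - of_rat q) < e)"

definition cdisk :: "('a \<Rightarrow> real) \<Rightarrow> 'a::field \<Rightarrow> real \<Rightarrow> 'a set" where
  "cdisk absv a \<delta> = {z. absv (z - a) \<le> \<delta>}"

definition fam :: "'a::field_char_0 \<Rightarrow> 'a \<Rightarrow> 'a" where
  "fam t z = - (3/2) * t * (- 2 * z ^ 3 + 3 * z ^ 2) + 1"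

definition D_a :: "('a::field_char_0 \<Rightarrow> real) \<Rightarrow> nat \<Rightarrow> 'a set" where
  "D_a absv n = cdisk absv (- 1/2 + 5 * 2 ^ (2*n+1)) (1 / 2 ^ (2*n+4))"

definition D_b :: "('a::field_char_0 \<Rightarrow> real) \<Rightarrow> nat \<Rightarrow> 'a set" where
  "D_b absv n = cdisk absv (- 1/2 + 7 * 2 ^ (2*n+1)) (1 / 2 ^ (2*n+4))"

end

theory Submission
  imports Defs
begin

lemma aux1: "k = Suc k' \<Longrightarrow> (1/2::real)^(2*k+1) \<le> 1/8"
proof -
  assume Suc: "k = Suc k'"
  have "(1/2::real)^(2*k+1) \<le> (1/2)^3" by (rule power_decreasing) (use Suc in simp_all)
  moreover have "(1/2::real)^3 = 1/8" by (simp add: power3_eq_cube)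
  ultimately show ?thesis by linarith
qed

lemma aux2: "4 * (1/2::real)^(2*Suc k'+1) = (1/2)^(2*k'+1)" by simp

locale q2 =
  fixes absv :: "'a::field_char_0 \<Rightarrow> real"
  assumes Q2: "is_Q2_abs absv"
begin

lemma nn: "0 \<le> absv x" using Q2 unfolding is_Q2_abs_def by blast
lemma zero_iff: "absv x = 0 \<longleftrightarrow> x = 0" using Q2 unfolding is_Q2_abs_def by blast
lemma mult: "absv (x * y) = absv x * absv y" using Q2 unfolding is_Q2_abs_def by blast
lemma ultra: "absv (x + y) \<le> max (absv x) (absv y)" using Q2 unfolding is_Q2_abs_def by blast
lemma ofrat: "absv (of_rat q) = rat_abs2 q" using Q2 unfolding is_Q2_abs_def by blast
lemma dense: "e > 0 \<Longrightarrow> \<exists>q. absv (x - of_rat q) < e" using Q2 unfolding is_Q2_abs_def by blast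

lemma a0[simp]: "absv 0 = 0" using zero_iff by simp

lemma pos: "x \<noteq> 0 \<Longrightarrow> absv x > 0" using nn zero_iff by (metis less_eq_real_def)

lemma one: "absv 1 = 1"
proof -
  have "absv 1 = absv 1 * absv 1" using mult[of 1 1] by simp
  moreover have "absv 1 \<noteq> 0" using zero_iff by simp
  ultimately show ?thesis by simp
qed

lemma minus: "absv (- x) = absv x"
proof -
  have "absv (-1) * absv (-1) = 1" using mult[of "-1" "-1"] one by simp
  hence "absv (-1) = 1" using nn[of "-1"]
    by (metis mult_cancel_right1 mult_le_cancel_left1 mult_less_cancel_left2 nle_le not_le zero_less_one)
  thus ?thesis using mult[of "-1" x] by simp
qed

lemma ultra_diff: "absv (x - y) \<le> max (absv x) (absv y)"
  using ultra[of x "-y"] minus[of y] by simp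

lemma strict: assumes "absv y < absv x" shows "absv (x + y) = absv x"
proof -
  have a: "absv (x + y) \<le> absv x" using ultra[of x y] assms by simp
  have "absv x \<le> max (absv (x+y)) (absv y)" using ultra[of "x+y" "-y"] minus[of y] by simp
  hence "absv x \<le> absv (x+y)" using assms by auto
  thus ?thesis using a by simp
qed

lemma power: "absv (x ^ n) = absv x ^ n"
  by (induction n) (simp_all add: one mult)

lemma divide: "absv (x / y) = absv x / absv y"
proof (cases "y = 0")
  case True thus ?thesis using zero_iff by simp
next
  case False
  have "absv (x / y) * absv y = absv x" using mult[of "x/y" y] False by simp
  thus ?thesis using pos[OF False] by (simp add: field_simps)
qed

lemma two: "absv 2 = 1/2"
proof -
  have "absv 2 = absv (of_rat 2)" by simp
  also have "\<dots> = rat_abs2 2" by (rule ofrat)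
  also have "\<dots> = 1/2"
    unfolding rat_abs2_def by (simp add: multiplicity_self powr_minus)
  finally show ?thesis .
qed

lemma int_le1_nat: "absv (of_nat n) \<le> 1"
proof (induction n)
  case 0 thus ?case using zero_iff by simp
next
  case (Suc n)
  have "absv (of_nat n + 1) \<le> max (absv (of_nat n)) (absv 1)" by (rule ultra)
  hence "absv (of_nat n + 1 :: 'a) \<le> 1" using Suc one by simp
  thus ?case by (metis add.commute of_nat_Suc)
qed

lemma int_le1: "absv (of_int n) \<le> 1"
proof (cases "n \<ge> 0")
  case True thus ?thesis using int_le1_nat[of "nat n"] by simp
next
  case False
  hence "of_int n = - (of_nat (nat (-n)) :: 'a)" by simp
  thus ?thesis using int_le1_nat[of "nat (-n)"] minus by simp
qed

lemma int_even: "even n \<Longrightarrow> absv (of_int n) \<le> 1/2"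
proof -
  assume "even n" then obtain m where "n = 2 * m" by auto
  hence "absv (of_int n) = absv 2 * absv (of_int m)" using mult by simp
  thus ?thesis using int_le1[of m] two by simp
qed

lemma int_odd: "odd n \<Longrightarrow> absv (of_int n) = 1"
proof -
  assume "odd n" then obtain m where "n = 2 * m + 1" by (metis oddE)
  hence e: "(of_int n :: 'a) = 1 + of_int (2*m)" by simp
  have "absv (of_int (2*m) :: 'a) \<le> 1/2" by (rule int_even) simp
  hence "absv (1 + of_int (2*m) :: 'a) = 1" using strict[of "of_int (2*m)" 1] one by simp
  thus ?thesis using e by simp
qed

lemma residue: assumes "absv u = 1" shows "absv (u - 1) \<le> 1/2"
proof -
  obtain q where hq: "absv (u - of_rat q) < 1/2" using dense[of "1/2" u] by auto
  have eq: "of_rat q = u + (- (u - of_rat q))" by simp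
  have "absv (u + - (u - of_rat q)) = absv u"
    by (rule strict) (use hq assms minus[of "u - of_rat q"] in simp)
  hence aq: "absv (of_rat q) = 1" using assms by simp
  obtain a b where qa: "quotient_of q = (a, b)" by (cases "quotient_of q")
  have bp: "b > 0" using quotient_of_denom_pos[OF qa] .
  have cop: "coprime a b" using quotient_of_coprime[OF qa] .
  have qd: "(of_rat q :: 'a) = of_int a / of_int b"
    using quotient_of_div[OF qa] by (simp add: of_rat_divide)
  have r: "absv (of_int a :: 'a) / absv (of_int b) = 1" using aq qd divide by simp
  have bne: "absv (of_int b :: 'a) > 0" using pos[of "of_int b"] bp by simp
  have ab: "absv (of_int a :: 'a) = absv (of_int b)" using r bne by (simp add: field_simps)
  have bodd: "odd b"
  proof
    assume "even b"
    have "odd a"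
    proof
      assume "even a"
      hence "is_unit (2::int)" using coprime_common_divisor[OF cop] \<open>even b\<close> by blast
      thus False by simp
    qed
    hence "absv (of_int a :: 'a) = 1" by (rule int_odd)
    moreover have "absv (of_int b :: 'a) \<le> 1/2" using \<open>even b\<close> by (rule int_even)
    ultimately show False using ab by simp
  qed
  have aodd: "odd a"
  proof
    assume "even a"
    hence "absv (of_int a :: 'a) \<le> 1/2" by (rule int_even)
    thus False using ab int_odd[OF bodd] by simp
  qed
  have "(of_rat q :: 'a) - 1 = of_int (a - b) / of_int b"
    using qd bp by (simp add: field_simps)
  hence "absv ((of_rat q :: 'a) - 1) = absv (of_int (a - b) :: 'a)"
    using divide int_odd[OF bodd] by simp
  also have "\<dots> \<le> 1/2" using aodd bodd by (intro int_even) simp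
  finally have h2: "absv ((of_rat q :: 'a) - 1) \<le> 1/2" .
  have "u - 1 = (u - of_rat q) + (of_rat q - 1)" by simp
  hence "absv (u - 1) \<le> max (absv (u - of_rat q)) (absv (of_rat q - 1))" using ultra by metis
  thus ?thesis using hq h2 by simp
qed

lemma discrete: assumes "y \<noteq> 0" shows "\<exists>j::int. absv y = 2 powr j"
proof -
  obtain q where hq: "absv (y - of_rat q) < absv y" using dense[of "absv y" y] pos[OF assms] by auto
  have eq: "of_rat q = y + (- (y - of_rat q))" by simp
  have "absv (y + - (y - of_rat q)) = absv y"
    by (rule strict) (use hq minus[of "y - of_rat q"] in simp)
  hence aq: "absv (of_rat q) = absv y" by simp
  hence ra: "rat_abs2 q = absv y" using ofrat by simp
  have "q \<noteq> 0" using ra pos[OF assms] unfolding rat_abs2_def by auto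
  obtain a b where qa: "quotient_of q = (a, b)" by (cases "quotient_of q")
  have "absv y = 2 powr (real (multiplicity (2::int) b) - real (multiplicity (2::int) a))"
    using ra \<open>q \<noteq> 0\<close> qa unfolding rat_abs2_def by simp
  thus ?thesis by (intro exI[of _ "int (multiplicity (2::int) b) - int (multiplicity (2::int) a)"]) simp
qed

lemma small: assumes "absv y < 1" shows "absv y \<le> 1/2"
proof (cases "y = 0")
  case True thus ?thesis using zero_iff by simp
next
  case False
  then obtain j :: int where j: "absv y = 2 powr j" using discrete by blast
  have "(2::real) powr j < 2 powr 0" using j assms by simp
  hence "real_of_int j < 0" by (subst (asm) powr_less_cancel_iff) simp_all
  hence "j < 0" by simp
  hence "real_of_int j \<le> -1" by simp
  hence "(2::real) powr j \<le> 2 powr (-1)" by (subst powr_le_cancel_iff) simp_all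
  thus ?thesis using j by (simp add: powr_minus)
qed

lemma powform: assumes "y \<noteq> 0" "absv y \<le> 1/2" shows "\<exists>m\<ge>1. absv y = (1/2)^m"
proof -
  obtain j :: int where j: "absv y = 2 powr j" using discrete assms(1) by blast
  have h: "(2::real) powr (-1) = 1/2" by (simp add: powr_minus)
  have "(2::real) powr j \<le> 2 powr (-1)" using j assms(2) h by simp
  hence "real_of_int j \<le> -1" by (subst (asm) powr_le_cancel_iff) simp_all
  hence jl: "j \<le> -1" by linarith
  define m where "m = nat (-j)"
  have jm: "real_of_int j = - real m" using jl m_def by simp
  have "absv y = 2 powr (- real m)" using j jm by (simp only:)
  also have "\<dots> = inverse (2 powr real m)" by (rule powr_minus)
  also have "2 powr real m = (2::real)^m" by (rule powr_realpow) simp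
  finally have "absv y = (1/2)^m" by (simp add: power_one_over inverse_eq_divide)
  moreover have "m \<ge> 1" using jl m_def by simp
  ultimately show ?thesis by blast
qed

lemma dich: assumes "absv z \<le> 1" shows "absv z \<le> 1/2 \<or> absv (z - 1) \<le> 1/2"
proof (cases "absv z = 1")
  case True thus ?thesis using residue by simp
next
  case False thus ?thesis using small assms by simp
qed

lemma c3: "absv 3 = 1" using int_odd[of 3] by simp
lemma c9: "absv 9 = 1" using int_odd[of 9] by simp
lemma c27: "absv 27 = 1" using int_odd[of 27] by simp
lemma chalf: "absv (1/2) = 2" using divide[of 1 2] one two by simp
lemma c32: "absv (3/2) = 2" using divide[of 3 2] c3 two by simp
lemma c274: "absv (27/4) = 4"
proof -
  have "absv (4::'a) = absv ((2::'a) * 2)" by simp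
  also have "\<dots> = absv (2::'a) * absv 2" by (rule mult)
  also have "\<dots> = 1/4" by (simp only: two)
  finally have a4: "absv (4::'a) = 1/4" .
  show ?thesis by (simp only: divide c27 a4) simp
qed

definition T :: "'a \<Rightarrow> bool" where
  "T z \<longleftrightarrow> absv z \<le> 1 \<or> (\<exists>k::nat. absv (z + 1/2) = (1/2)^(2*k+1)) \<or> z = -1/2"

lemma T_bound: "T z \<Longrightarrow> absv z \<le> 2"
proof -
  assume "T z"
  have z: "z = (z + 1/2) + (- (1/2))" by simp
  have "absv z \<le> max (absv (z + 1/2)) (absv (-(1/2)))" by (subst z, rule ultra)
  hence m: "absv z \<le> max (absv (z + 1/2)) 2" using minus chalf by simp
  show ?thesis using \<open>T z\<close> unfolding T_def
  proof (elim disjE exE)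
    fix k :: nat assume "absv (z + 1/2) = (1/2)^(2*k+1)"
    moreover have "(1/2::real)^(2*k+1) \<le> 1" by (rule power_le_one) simp_all
    ultimately show ?thesis using m by simp
  next
    assume "z = -1/2" thus ?thesis using minus chalf by simp
  qed simp
qed

lemma c5: "absv 5 = 1" using int_odd[of 5] by simp
lemma c7: "absv 7 = 1" using int_odd[of 7] by simp
lemma c26: "absv 26 \<le> 1/2" using int_even[of 26] by simp

lemma fam_m: "fam 1 (-1/2 :: 'a) = -1/2" by (simp add: fam_def field_simps)
lemma fam_1: "fam 1 (1 :: 'a) = -1/2" by (simp add: fam_def field_simps)
lemma id1: "fam 1 z = 1 + (3/2) * z^2 * (2*z - 3)"
  by (simp add: fam_def field_simps power2_eq_square power3_eq_cube)
lemma id2: "fam 1 z + 1/2 = (3/2) * (z-1)^2 * (2*z+1)"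
  by (simp add: fam_def field_simps power2_eq_square power3_eq_cube)
lemma id3: "fam 1 z + 1/2 = (27/4)*(z+1/2) + (-9*(z+1/2)^2 + 3*(z+1/2)^3)"
  by (simp add: fam_def field_simps power2_eq_square power3_eq_cube)
lemma id4: "fam 1 z = ((1/2)*(27*((z+1/2)/2 - 1) + 26)) + (-9*(z+1/2)^2 + 3*(z+1/2)^3)"
  by (simp add: fam_def field_simps power2_eq_square power3_eq_cube)

lemma step: assumes "T z" shows "T (fam 1 z)"
proof -
  consider (A) "absv z \<le> 1" | (B) k where "absv (z + 1/2) = (1/2)^(2*k+1)" | (C) "z = -1/2"
    using assms unfolding T_def by blast
  then show ?thesis
  proof cases
    case A
    from dich[OF A] show ?thesis
    proof
      assume h: "absv z \<le> 1/2"
      have "absv (2*z) \<le> 1/4" using mult[of 2 z] two h by simp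
      hence "absv (2*z - 3) \<le> 1" using ultra_diff[of "2*z" 3] c3 by simp
      moreover have "absv z ^ 2 \<le> (1/2)^2" using h nn by (intro power_mono) auto
      ultimately have "absv z ^ 2 * absv (2*z-3) \<le> (1/2)^2 * 1"
        using nn by (intro mult_mono) auto
      moreover have "absv ((3/2) * z^2 * (2*z - 3)) = 2 * (absv z ^ 2 * absv (2*z-3))"
        by (simp only: mult power c32 mult.assoc)
      moreover have "(1/2::real)^2 * 1 = 1/4" by (simp add: power2_eq_square)
      ultimately have "absv ((3/2) * z^2 * (2*z - 3)) \<le> 2 * (1/4) * 1" by linarith
      hence "absv (1 + (3/2) * z^2 * (2*z - 3)) \<le> 1" using ultra[of 1 "(3/2) * z^2 * (2*z - 3)"] one by simp
      thus ?thesis unfolding T_def id1[of z] by simp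
    next
      assume h: "absv (z - 1) \<le> 1/2"
      show ?thesis
      proof (cases "z = 1")
        case True thus ?thesis unfolding T_def using fam_1 by simp
      next
        case False
        hence "z - 1 \<noteq> 0" by simp
        then obtain m where m: "m \<ge> 1" "absv (z - 1) = (1/2)^m" using powform h by blast
        have pl: "(1/2::real)^m \<le> 1" by (rule power_le_one) simp_all
        have "absv (2*(z-1)) = 1/2 * (1/2)^m" by (simp only: mult two m(2))
        hence "absv (2*(z-1)) < absv (3::'a)" using pl c3 by linarith
        hence "absv (3 + 2*(z-1)) = absv (3::'a)" by (rule strict)
        hence "absv (3 + 2*(z-1)) = 1" using c3 by simp
        moreover have "(3::'a) + 2*(z-1) = 2*z+1" by (simp add: algebra_simps)
        ultimately have u: "absv (2*z+1) = 1" by metis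
        have "absv (fam 1 z + 1/2) = 2 * ((1/2)^m)^2"
          unfolding id2 by (simp only: mult c32 power u m(2))
        also have "\<dots> = (1/2)^(2*(m-1)+1)"
        proof -
          obtain m' where "m = Suc m'" using m(1) by (cases m) auto
          have "((1/2::real)^m')^2 = (1/2)^(2*m')" by (simp add: power_mult[symmetric] mult.commute)
          moreover have "2 * ((1/2::real)^(Suc m'))^2 = ((1/2::real)^m')^2 * (1/2)"
            by (simp add: power_divide power_mult_distrib)
          ultimately show ?thesis using \<open>m = Suc m'\<close> by simp
        qed
        finally have ex: "\<exists>k. absv (fam 1 z + 1/2) = (1/2)^(2*k+1)" by (rule exI)
        show ?thesis unfolding T_def by (rule disjI2, rule disjI1, rule ex)
      qed
    qed
  next
    case (B k)
    define w where "w = z + 1/2"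
    have aw: "absv w = (1/2)^(2*k+1)" using B unfolding w_def .
    have a9: "absv (-9*w^2) = absv w ^ 2"
    proof -
      have "absv (-9*w^2) = absv (9*w^2)" using minus[of "9*w^2"] by simp
      also have "\<dots> = absv (9::'a) * absv w ^ 2" by (simp only: mult power)
      also have "\<dots> = absv w ^ 2" by (simp only: c9 mult_1)
      finally show ?thesis .
    qed
    have a3: "absv (3*w^3) = absv w ^ 3" by (simp only: mult power c3 mult_1)
    have wl: "absv w \<le> 1" unfolding aw by (rule power_le_one) simp_all
    have "absv w ^ 3 \<le> absv w ^ 2" by (rule power_decreasing) (use wl nn in simp_all)
    have r3: "absv (-9*w^2 + 3*w^3) \<le> absv w ^ 2"
      using ultra[of "-9*w^2" "3*w^3"] a9 a3 \<open>absv w ^ 3 \<le> absv w ^ 2\<close> by linarith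
    show ?thesis
    proof (cases k)
      case 0
      hence aw0: "absv w = 1/2" using aw by simp
      have "absv (w/2) = absv w / absv (2::'a)" by (rule divide)
      hence "absv (w/2) = 1" using two aw0 by simp
      hence "absv (w/2 - 1) \<le> 1/2" by (rule residue)
      moreover have "absv (27*(w/2 - 1)) = absv (w/2 - 1)" by (simp only: mult c27 mult_1)
      ultimately have "absv (27*(w/2 - 1)) \<le> 1/2" by simp
      hence "absv (27*(w/2 - 1) + 26) \<le> 1/2" using ultra[of "27*(w/2 - 1)" 26] c26 by linarith
      moreover have "absv ((1/2)*(27*(w/2 - 1) + 26)) = 2 * absv (27*(w/2 - 1) + 26)"
        by (simp only: mult chalf)
      ultimately have t1: "absv ((1/2)*(27*(w/2 - 1) + 26)) \<le> 1" by linarith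
      have t2: "absv (-9*w^2 + 3*w^3) \<le> 1" using r3 aw0 by (simp add: power2_eq_square)
      have "absv (((1/2)*(27*(w/2 - 1) + 26)) + (-9*w^2 + 3*w^3)) \<le> 1"
        using ultra[of "(1/2)*(27*(w/2 - 1) + 26)" "-9*w^2 + 3*w^3"] t1 t2 by linarith
      hence "absv (fam 1 z) \<le> 1" unfolding id4[of z] w_def .
      thus ?thesis unfolding T_def by (rule disjI1)
    next
      case (Suc k')
      have rp2: "absv w \<le> 1/8" unfolding aw by (rule aux1[OF Suc])
      have rp1: "0 < absv w" unfolding aw by (rule zero_less_power) simp
      have "absv ((27/4) * w) = absv (27/4::'a) * absv w" by (rule mult)
      hence l1: "absv ((27/4) * w) = 4 * absv w" unfolding c274 .
      have "absv w * absv w \<le> absv w * (1/8)" by (rule mult_left_mono[OF rp2 less_imp_le[OF rp1]])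
      moreover have "absv w ^ 2 = absv w * absv w" by (simp add: power2_eq_square)
      ultimately have l2: "absv (-9*w^2 + 3*w^3) < absv ((27/4) * w)" using r3 l1 rp1 by linarith
      have "absv ((27/4) * w + (-9*w^2 + 3*w^3)) = absv ((27/4) * w)"
        by (rule strict[OF l2])
      hence "absv (fam 1 z + 1/2) = 4 * absv w" unfolding id3[of z] w_def[symmetric] l1 .
      also have "\<dots> = (1/2)^(2*k'+1)" unfolding aw Suc by (rule aux2)
      finally have ex: "\<exists>k. absv (fam 1 z + 1/2) = (1/2)^(2*k+1)" by (rule exI)
      show ?thesis unfolding T_def by (rule disjI2, rule disjI1, rule ex)
    qed
  next
    case C thus ?thesis unfolding T_def using fam_m by simp
  qed
qed

lemma init: assumes "z \<in> D_a absv n \<or> z \<in> D_b absv n" shows "T z"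
proof -
  obtain c :: 'a where c: "absv c = 1" and hz: "absv (z - (- 1/2 + c * 2^(2*n+1))) \<le> 1 / 2^(2*n+4)"
    using assms c5 c7 unfolding D_a_def D_b_def cdisk_def by auto
  have e: "z + 1/2 = c * 2^(2*n+1) + (z - (- 1/2 + c * 2^(2*n+1)))" by simp
  have a1: "absv (c * 2^(2*n+1)) = (1/2)^(2*n+1)" by (simp only: mult c power two)
  have p: "(0::real) < 2^(2*n)" by simp
  have "(1::real) / 2^(2*n+4) < (1/2)^(2*n+1)" using p by (simp add: power_add power_one_over field_simps)
  hence lt: "absv (z - (- 1/2 + c * 2^(2*n+1))) < absv (c * 2^(2*n+1))" using a1 hz by linarith
  have "absv (c * 2^(2*n+1) + (z - (- 1/2 + c * 2^(2*n+1)))) = absv (c * 2^(2*n+1))"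
    by (rule strict[OF lt])
  hence "absv (z + 1/2) = (1/2)^(2*n+1)" using e a1 by metis
  hence ex: "\<exists>k. absv (z + 1/2) = (1/2)^(2*k+1)" by (rule exI)
  show ?thesis unfolding T_def by (rule disjI2, rule disjI1, rule ex)
qed

end

theorem mainTheorem9:
  fixes absv :: "'a::field_char_0 \<Rightarrow> real" and z :: 'a
  assumes "is_Q2_abs absv"
    and "\<exists>n::nat. z \<in> D_a absv n \<or> z \<in> D_b absv n"
  shows "\<exists>B. \<forall>k::nat. absv ((fam 1 ^^ k) z) \<le> B"
proof -
  interpret q2 absv using assms(1) by unfold_locales
  obtain n where "z \<in> D_a absv n \<or> z \<in> D_b absv n" using assms(2) by blast
  hence t0: "T z" by (rule init)
  have "T ((fam 1 ^^ k) z)" for k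
    by (induction k) (simp_all add: t0 step)
  thus ?thesis using T_bound by blast
qed

end
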